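(* Suppose that $\|\mathcal{P}_{T_i}\mathcal{A}_{i,p}^*\mathcal{A}_{i,p}\boldsymbol{S}_{i,p}\mathcal{P}_{T_i}-\mathcal{P}_{T_i}\|\le\frac14$ for all $1\le i\le r$, $1\le p\le P$, and $\|\mathcal{P}_{T_j}\mathcal{A}_{j,p}^*\mathcal{A}_{k,p}\boldsymbol{S}_{k,p}\mathcal{P}_{T_k}\|\le\frac1{4r}$ for all $1\le j\ne k\le r$, $1\le p\le P$. Then the golfing scheme defined in the context generates a sequence $\{\boldsymbol{Y}_{i,p}\}_{p=1}^P$ such that $$\|\boldsymbol{W}_{i,p}\|_F=\|\mathcal{P}_{T_i}(\boldsymbol{Y}_{i,p})-\boldsymbol{h}_i\boldsymbol{x}_i^*\|_F\le2^{-p}$$ holds simultaneously for all $1\le i\le r$ (and $1\le p\le P$). In particular, if $P\ge\log_2(5r\gamma)$, then $\|\mathcal{P}_{T_i}(\boldsymbol{Y}_i)-\boldsymbol{h}_i\boldsymbol{x}_i^*\|_F\le\frac1{5r\gamma}$, where $\boldsymbol{Y}_i:=\boldsymbol{Y}_{i,P}$.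
   Context: $\boldsymbol{h}_i\in\mathbb{R}^{K_i}$, $\boldsymbol{x}_i\in\mathbb{R}^{N_i}$ real unit-norm (standing assumption); $\boldsymbol{b}_{i,l}\in\mathbb{C}^{K_i}$, $\boldsymbol{a}_{i,l}\in\mathbb{R}^{N_i}$ given vectors. Partition $\{\Gamma_p\}_{p=1}^P$ of $\{1,\dots,L\}$ with $|\Gamma_p|=Q$; $\boldsymbol{T}_{i,p}=\sum_{l\in\Gamma_p}\boldsymbol{b}_{i,l}\boldsymbol{b}_{i,l}^*$ invertible, $\boldsymbol{S}_{i,p}=\boldsymbol{T}_{i,p}^{-1}$ (acting as $\boldsymbol{Z}\mapsto\boldsymbol{S}_{i,p}\boldsymbol{Z}$). $\mathcal{A}_{i,p}(\boldsymbol{Z})=\{\boldsymbol{b}_{i,l}^*\boldsymbol{Z}\boldsymbol{a}_{i,l}\}_{l\in\Gamma_p}$, $\mathcal{A}_{i,p}^*(\boldsymbol{z})=\sum_{l\in\Gamma_p}z_l\boldsymbol{b}_{i,l}\boldsymbol{a}_{i,l}^*$; $\mathcal{P}_{T_i}(\boldsymbol{Z})=\boldsymbol{h}_i\boldsymbol{h}_i^*\boldsymbol{Z}+(\boldsymbol{I}-\boldsymbol{h}_i\boldsymbol{h}_i^* )\boldsymbol{Z}\boldsymbol{x}_i\boldsymbol{x}_i^*$. Operator norms w.r.t. Frobenius norms. $\gamma>0$ is an upper bound on the operator norms $\|\mathcal{A}_i\|$ of $\mathcal{A}_i(\boldsymbol{Z})=\{\boldsymbol{b}_{i,l}^*\boldsymbol{Z}\boldsymbol{a}_{i,l}\}_{l=1}^L$.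 Golfing scheme: $\boldsymbol{Y}_{i,0}=\boldsymbol{0}$; for $p=1,\dots,P$: $\boldsymbol{\lambda}_{p-1}:=\sum_{j=1}^r\mathcal{A}_{j,p}\big(\boldsymbol{S}_{j,p}(\boldsymbol{h}_j\boldsymbol{x}_j^*-\mathcal{P}_{T_j}(\boldsymbol{Y}_{j,p-1}))\big)$ and $\boldsymbol{Y}_{i,p}:=\boldsymbol{Y}_{i,p-1}+\mathcal{A}_{i,p}^*(\boldsymbol{\lambda}_{p-1})$; $\boldsymbol{W}_{i,p}:=\boldsymbol{h}_i\boldsymbol{x}_i^*-\mathcal{P}_{T_i}(\boldsymbol{Y}_{i,p})$. *)

theory Defs
  imports "Jordan_Normal_Form.Matrix"
begin

definition frob :: "complex mat \<Rightarrow> real" where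
  "frob Z = sqrt (\<Sum>k<dim_row Z. \<Sum>n<dim_col Z. (cmod (Z $$ (k, n)))\<^sup>2)"

definition rnorm :: "real vec \<Rightarrow> real" where
  "rnorm v = sqrt (\<Sum>k<dim_vec v. (v $ k)\<^sup>2)"

definition cnorm_on :: "nat set \<Rightarrow> (nat \<Rightarrow> complex) \<Rightarrow> real" where
  "cnorm_on I z = sqrt (\<Sum>l\<in>I. (cmod (z l))\<^sup>2)"

definition op_norm :: "nat \<Rightarrow> nat \<Rightarrow> ('b \<Rightarrow> real) \<Rightarrow> (complex mat \<Rightarrow> 'b) \<Rightarrow> real" where
  "op_norm m n nrm F = Sup ((\<lambda>Z. nrm (F Z)) ` {Z \<in> carrier_mat m n. frob Z \<le> 1})"

definition cvec :: "real vec \<Rightarrow> complex vec" where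
  "cvec v = map_vec complex_of_real v"

definition outer :: "complex vec \<Rightarrow> complex vec \<Rightarrow> complex mat" where
  "outer u v = mat (dim_vec u) (dim_vec v) (\<lambda>(k, n). u $ k * cnj (v $ n))"

definition bform :: "complex vec \<Rightarrow> complex mat \<Rightarrow> complex vec \<Rightarrow> complex" where
  "bform b Z a = conjugate b \<bullet> (Z *\<^sub>v a)"

definition PT :: "real vec \<Rightarrow> real vec \<Rightarrow> complex mat \<Rightarrow> complex mat" where
  "PT h x Z = outer (cvec h) (cvec h) * Z
     + (1\<^sub>m (dim_vec h) - outer (cvec h) (cvec h)) * Z * outer (cvec x) (cvec x)"

definition Aop :: "(nat \<Rightarrow> nat \<Rightarrow> complex vec) \<Rightarrow> (nat \<Rightarrow> nat \<Rightarrow> real vec) \<Rightarrow> nat set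
    \<Rightarrow> nat \<Rightarrow> complex mat \<Rightarrow> (nat \<Rightarrow> complex)" where
  "Aop b a G i Z = (\<lambda>l. if l \<in> G then bform (b i l) Z (cvec (a i l)) else 0)"

definition Aadj :: "(nat \<Rightarrow> nat) \<Rightarrow> (nat \<Rightarrow> nat) \<Rightarrow> (nat \<Rightarrow> nat \<Rightarrow> complex vec)
    \<Rightarrow> (nat \<Rightarrow> nat \<Rightarrow> real vec) \<Rightarrow> nat set \<Rightarrow> nat \<Rightarrow> (nat \<Rightarrow> complex) \<Rightarrow> complex mat" where
  "Aadj K N b a G i z = mat (K i) (N i) (\<lambda>(k, n). \<Sum>l\<in>G. z l * (outer (b i l) (cvec (a i l)) $$ (k, n)))"

definition Tmat :: "(nat \<Rightarrow> nat) \<Rightarrow> (nat \<Rightarrow> nat \<Rightarrow> complex vec) \<Rightarrow> nat set \<Rightarrow> nat \<Rightarrow> complex mat" where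
  "Tmat K b G i = mat (K i) (K i) (\<lambda>(k, n). \<Sum>l\<in>G. outer (b i l) (b i l) $$ (k, n))"

text \<open>Index p of the partition starts at 1.
  lambda_{p-1} = sum_{j=1}^r A_{j,p}(S_{j,p}(h_j x_j^* - P_{T_j}(Y_{j,p-1}))),
  Y_{i,p} = Y_{i,p-1} + A_{i,p}^*(lambda_{p-1}).\<close>
primrec golf :: "nat \<Rightarrow> (nat \<Rightarrow> nat) \<Rightarrow> (nat \<Rightarrow> nat) \<Rightarrow> (nat \<Rightarrow> real vec) \<Rightarrow> (nat \<Rightarrow> real vec)
    \<Rightarrow> (nat \<Rightarrow> nat \<Rightarrow> complex vec) \<Rightarrow> (nat \<Rightarrow> nat \<Rightarrow> real vec) \<Rightarrow> (nat \<Rightarrow> nat set)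
    \<Rightarrow> (nat \<Rightarrow> nat \<Rightarrow> complex mat) \<Rightarrow> nat \<Rightarrow> nat \<Rightarrow> complex mat" where
  "golf r K N h x b a \<Gamma> S 0 = (\<lambda>i. 0\<^sub>m (K i) (N i))"
| "golf r K N h x b a \<Gamma> S (Suc p) =
    (let Y = golf r K N h x b a \<Gamma> S p;
         lam = (\<lambda>l. \<Sum>j\<in>{1..r}. Aop b a (\<Gamma> (Suc p)) j
                  (S j (Suc p) * (outer (cvec (h j)) (cvec (x j)) - PT (h j) (x j) (Y j))) l)
     in (\<lambda>i. Y i + Aadj K N b a (\<Gamma> (Suc p)) i lam))"

end

theory Submission
  imports Defs "HOL-Analysis.L2_Norm"
begin

lemma frob_L2: "frob Z = L2_set (\<lambda>(k,n). cmod (Z $$ (k,n))) ({..<dim_row Z} \<times> {..<dim_col Z})"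
  unfolding frob_def L2_set_def
  by (simp add: sum.cartesian_product case_prod_beta)

lemma frob_nonneg: "frob Z \<ge> 0"
  unfolding frob_L2 by simp

lemma frob_entry: "k < dim_row Z \<Longrightarrow> n < dim_col Z \<Longrightarrow> cmod (Z $$ (k,n)) \<le> frob Z"
  unfolding frob_L2
  using member_le_L2_set[of "{..<dim_row Z} \<times> {..<dim_col Z}" "(k,n)" "\<lambda>(k,n). cmod (Z $$ (k,n))"]
  by simp

lemma frob_smult: "frob (c \<cdot>\<^sub>m A) = cmod c * frob A"
proof -
  have "frob (c \<cdot>\<^sub>m A) = L2_set (\<lambda>kn. cmod c * (\<lambda>(k,n). cmod (A $$ (k,n))) kn) ({..<dim_row A} \<times> {..<dim_col A})"
    unfolding frob_L2 by (intro L2_set_cong) (auto simp: norm_mult)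
  also have "\<dots> = cmod c * frob A" unfolding frob_L2 by (simp add: L2_set_right_distrib)
  finally show ?thesis .
qed

lemma frob_add: assumes "A \<in> carrier_mat m n" "B \<in> carrier_mat m n"
  shows "frob (A + B) \<le> frob A + frob B"
proof -
  have "frob (A + B) = L2_set (\<lambda>(k,l). cmod (A $$ (k,l) + B $$ (k,l))) ({..<m} \<times> {..<n})"
    unfolding frob_L2 using assms by (intro L2_set_cong) auto
  also have "\<dots> \<le> L2_set (\<lambda>kl. (\<lambda>(k,l). cmod (A $$ (k,l))) kl + (\<lambda>(k,l). cmod (B $$ (k,l))) kl) ({..<m} \<times> {..<n})"
    by (intro L2_set_mono) (auto simp: norm_triangle_ineq)
  also have "\<dots> \<le> frob A + frob B" unfolding frob_L2 using assms
    using L2_set_triangle_ineq[of "\<lambda>(k,l). cmod (A $$ (k,l))" "\<lambda>(k,l). cmod (B $$ (k,l))"] by simp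
  finally show ?thesis .
qed

lemma frob_zero: "frob (0\<^sub>m m n) = 0"
  unfolding frob_def by simp

lemma frob_minus_commute: assumes "A \<in> carrier_mat m n" "B \<in> carrier_mat m n"
  shows "frob (A - B) = frob (B - A)"
  unfolding frob_def using assms by (simp add: norm_minus_commute)

lemma lin_zero:
  fixes F :: "complex mat \<Rightarrow> complex mat"
  assumes smult: "\<And>A c. A \<in> carrier_mat m n \<Longrightarrow> F (c \<cdot>\<^sub>m A) = c \<cdot>\<^sub>m F A"
  shows "frob (F (0\<^sub>m m n)) = 0"
proof -
  have "F (0\<^sub>m m n) = F (0 \<cdot>\<^sub>m 0\<^sub>m m n)" by simp
  also have "\<dots> = 0 \<cdot>\<^sub>m F (0\<^sub>m m n)" by (rule smult) simp
  finally show ?thesis by (metis frob_smult mult_zero_left norm_zero)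
qed

lemma lin_bounded:
  fixes F :: "complex mat \<Rightarrow> complex mat"
  assumes add: "\<And>A B. A \<in> carrier_mat m n \<Longrightarrow> B \<in> carrier_mat m n \<Longrightarrow> F (A + B) = F A + F B"
    and smult: "\<And>A c. A \<in> carrier_mat m n \<Longrightarrow> F (c \<cdot>\<^sub>m A) = c \<cdot>\<^sub>m F A"
    and car: "\<And>A. A \<in> carrier_mat m n \<Longrightarrow> F A \<in> carrier_mat m' n'"
  shows "\<exists>C\<ge>0. \<forall>Z\<in>carrier_mat m n. frob (F Z) \<le> C * frob Z"
proof -
  define I where "I = {..<m} \<times> {..<n}"
  define E where "E ij = mat m n (\<lambda>kl. if kl = ij then 1 else (0::complex))" for ij
  define C where "C = (\<Sum>ij\<in>I. frob (F (E ij)))"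
  have C0: "C \<ge> 0" unfolding C_def by (intro sum_nonneg frob_nonneg)
  have "frob (F Z) \<le> C * frob Z" if Z: "Z \<in> carrier_mat m n" for Z
  proof -
    define ZJ where "ZJ J = mat m n (\<lambda>kl. if kl \<in> J then Z $$ kl else 0)" for J
    have ZJc: "ZJ J \<in> carrier_mat m n" for J unfolding ZJ_def by simp
    have key: "frob (F (ZJ J)) \<le> (\<Sum>ij\<in>J. cmod (Z $$ ij) * frob (F (E ij)))"
      if "finite J" for J
      using that
    proof (induction J rule: finite_induct)
      case empty
      have "ZJ {} = 0\<^sub>m m n" unfolding ZJ_def by (intro eq_matI) auto
      then show ?case using lin_zero[OF smult] by simp
    next
      case (insert ij J)
      have eq: "ZJ (insert ij J) = ZJ J + (Z $$ ij) \<cdot>\<^sub>m E ij"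
        unfolding ZJ_def E_def using insert(2) by (intro eq_matI) auto
      have Ec: "E ij \<in> carrier_mat m n" unfolding E_def by simp
      have "F (ZJ (insert ij J)) = F (ZJ J) + (Z $$ ij) \<cdot>\<^sub>m F (E ij)"
        unfolding eq using add[OF ZJc, of "(Z $$ ij) \<cdot>\<^sub>m E ij"] smult[OF Ec] Ec by simp
      then have "frob (F (ZJ (insert ij J))) \<le> frob (F (ZJ J)) + frob ((Z $$ ij) \<cdot>\<^sub>m F (E ij))"
        using frob_add[OF car[OF ZJc], of "(Z $$ ij) \<cdot>\<^sub>m F (E ij)"] car[OF Ec] by simp
      then show ?case using insert by (simp add: frob_smult)
    qed
    have "ZJ I = Z" unfolding ZJ_def I_def using Z by (intro eq_matI) auto
    then have "frob (F Z) \<le> (\<Sum>ij\<in>I. cmod (Z $$ ij) * frob (F (E ij)))"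
      using key[of I] unfolding I_def by simp
    also have "\<dots> \<le> (\<Sum>ij\<in>I. frob Z * frob (F (E ij)))"
      using Z by (intro sum_mono mult_right_mono frob_nonneg) (auto simp: I_def intro!: frob_entry)
    also have "\<dots> = C * frob Z" unfolding C_def by (simp add: sum_distrib_left mult.commute)
    finally show ?thesis .
  qed
  then show ?thesis using C0 by blast
qed

lemma op_norm_le:
  fixes F :: "complex mat \<Rightarrow> complex mat"
  assumes add: "\<And>A B. A \<in> carrier_mat m n \<Longrightarrow> B \<in> carrier_mat m n \<Longrightarrow> F (A + B) = F A + F B"
    and smult: "\<And>A c. A \<in> carrier_mat m n \<Longrightarrow> F (c \<cdot>\<^sub>m A) = c \<cdot>\<^sub>m F A"
    and car: "\<And>A. A \<in> carrier_mat m n \<Longrightarrow> F A \<in> carrier_mat m' n'"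
    and Z: "Z \<in> carrier_mat m n"
  shows "frob (F Z) \<le> op_norm m n frob F * frob Z"
proof -
  obtain C where C: "C \<ge> 0" "\<forall>Z\<in>carrier_mat m n. frob (F Z) \<le> C * frob Z"
    using lin_bounded[OF add smult car] by blast
  let ?X = "(\<lambda>Z. frob (F Z)) ` {Z \<in> carrier_mat m n. frob Z \<le> 1}"
  have bdd: "bdd_above ?X"
  proof (rule bdd_aboveI)
    fix y assume "y \<in> ?X"
    then obtain Z where "Z \<in> carrier_mat m n" "frob Z \<le> 1" "y = frob (F Z)" by auto
    then show "y \<le> C" using C by (metis mult_left_le order_trans)
  qed
  show ?thesis
  proof (cases "frob Z = 0")
    case True
    have "Z = 0\<^sub>m m n"
    proof (intro eq_matI)
      fix i j assume "i < dim_row (0\<^sub>m m n)" "j < dim_col (0\<^sub>m m n)"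
      then have "cmod (Z $$ (i,j)) \<le> 0" using frob_entry[of i Z j] Z True by simp
      then show "Z $$ (i,j) = 0\<^sub>m m n $$ (i,j)" using \<open>i < _\<close> \<open>j < _\<close> by simp
    qed (use Z in auto)
    then show ?thesis using lin_zero[OF smult] True by simp
  next
    case False
    then have fp: "frob Z > 0" using frob_nonneg[of Z] by linarith
    define Z' where "Z' = complex_of_real (1 / frob Z) \<cdot>\<^sub>m Z"
    have Z'c: "Z' \<in> carrier_mat m n" unfolding Z'_def using Z by simp
    have "frob Z' = 1" unfolding Z'_def frob_smult using fp by (simp add: norm_divide)
    then have "frob (F Z') \<in> ?X" using Z'c by auto
    then have "frob (F Z') \<le> op_norm m n frob F" unfolding op_norm_def using bdd by (rule cSup_upper)
    moreover have "frob (F Z') = frob (F Z) / frob Z"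
      unfolding Z'_def smult[OF Z] frob_smult using fp by (simp add: norm_divide)
    ultimately show ?thesis using fp by (simp add: divide_le_eq)
  qed
qed

lemma PT_gen_add:
  fixes H X A B :: "complex mat"
  assumes H: "H \<in> carrier_mat k k" and X: "X \<in> carrier_mat nn nn"
    and A: "A \<in> carrier_mat k nn" and B: "B \<in> carrier_mat k nn"
  shows "H * (A + B) + (1\<^sub>m k - H) * (A + B) * X = (H * A + (1\<^sub>m k - H) * A * X) + (H * B + (1\<^sub>m k - H) * B * X)"
proof -
  have G: "1\<^sub>m k - H \<in> carrier_mat k k" using H by (simp add: minus_carrier_mat)
  have 1: "H * (A + B) = H * A + H * B" using H A B by (simp add: mult_add_distrib_mat)
  have 2: "(1\<^sub>m k - H) * (A + B) = (1\<^sub>m k - H) * A + (1\<^sub>m k - H) * B"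
    using G A B by (rule mult_add_distrib_mat)
  have 3: "((1\<^sub>m k - H) * A + (1\<^sub>m k - H) * B) * X = (1\<^sub>m k - H) * A * X + (1\<^sub>m k - H) * B * X"
    using G A B X by (intro add_mult_distrib_mat) auto
  have c: "H * A \<in> carrier_mat k nn" "H * B \<in> carrier_mat k nn" "(1\<^sub>m k - H) * A * X \<in> carrier_mat k nn"
     "(1\<^sub>m k - H) * B * X \<in> carrier_mat k nn" using G H A B X by auto
  show ?thesis unfolding 1 2 3 using c
    by (smt (verit) add_carrier_mat assoc_add_mat comm_add_mat)
qed

lemma PT_gen_smult:
  fixes H X A :: "complex mat"
  assumes H: "H \<in> carrier_mat k k" and X: "X \<in> carrier_mat nn nn"
    and A: "A \<in> carrier_mat k nn"
  shows "H * (c \<cdot>\<^sub>m A) + (1\<^sub>m k - H) * (c \<cdot>\<^sub>m A) * X = c \<cdot>\<^sub>m (H * A + (1\<^sub>m k - H) * A * X)"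
proof -
  have G: "1\<^sub>m k - H \<in> carrier_mat k k" using H by (simp add: minus_carrier_mat)
  have 1: "H * (c \<cdot>\<^sub>m A) = c \<cdot>\<^sub>m (H * A)" using H A by (rule mult_smult_distrib)
  have 2: "(1\<^sub>m k - H) * (c \<cdot>\<^sub>m A) = c \<cdot>\<^sub>m ((1\<^sub>m k - H) * A)" using G A by (rule mult_smult_distrib)
  have 3: "(c \<cdot>\<^sub>m ((1\<^sub>m k - H) * A)) * X = c \<cdot>\<^sub>m ((1\<^sub>m k - H) * A * X)"
    using G A X by (intro mult_smult_assoc_mat) auto
  show ?thesis unfolding 1 2 3 using G H A X
    by (intro add_smult_distrib_left_mat[symmetric]) auto
qed

lemma PT_gen_idem:
  fixes H X Z :: "complex mat"
  assumes H: "H \<in> carrier_mat k k" and X: "X \<in> carrier_mat nn nn"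
    and HH: "H * H = H" and XX: "X * X = X"
    and Z: "Z \<in> carrier_mat k nn"
  shows "H * (H * Z + (1\<^sub>m k - H) * Z * X) + (1\<^sub>m k - H) * (H * Z + (1\<^sub>m k - H) * Z * X) * X
       = H * Z + (1\<^sub>m k - H) * Z * X"
proof -
  define G where "G = 1\<^sub>m k - H"
  have G: "G \<in> carrier_mat k k" using H unfolding G_def by (simp add: minus_carrier_mat)
  have HG: "H * G = 0\<^sub>m k k" unfolding G_def using H HH
    by (simp add: mult_minus_distrib_mat[OF H one_carrier_mat H])
  have GH: "G * H = 0\<^sub>m k k" unfolding G_def using H HH
    by (simp add: minus_mult_distrib_mat[OF one_carrier_mat H H])
  have GG: "G * G = G"
  proof -
    have "G * G = G * (1\<^sub>m k - H)" unfolding G_def ..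
    also have "\<dots> = G * 1\<^sub>m k - G * H" by (rule mult_minus_distrib_mat[OF G one_carrier_mat H])
    also have "\<dots> = G" using G GH by (intro eq_matI) auto
    finally show ?thesis .
  qed
  have ZX: "Z * X \<in> carrier_mat k nn" using Z X by simp
  have HZ: "H * Z \<in> carrier_mat k nn" using Z H by simp
  have GZX: "G * Z * X \<in> carrier_mat k nn" using Z X G by simp
  have 1: "H * (H * Z + G * Z * X) = H * Z"
  proof -
    have "H * (H * Z + G * Z * X) = H * (H * Z) + H * (G * Z * X)"
      using H HZ GZX by (rule mult_add_distrib_mat)
    also have "H * (H * Z) = H * Z" using assoc_mult_mat[OF H H Z] HH by simp
    also have "H * (G * Z * X) = (H * G) * (Z * X)" using assoc_mult_mat[OF G Z X] assoc_mult_mat[OF H G ZX] by simp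
    also have "\<dots> = 0\<^sub>m k nn" by (simp add: HG left_mult_zero_mat[OF ZX])
    finally show ?thesis using HZ by simp
  qed
  have 2: "G * (H * Z + G * Z * X) * X = G * Z * X"
  proof -
    have "G * (H * Z + G * Z * X) = G * (H * Z) + G * (G * Z * X)"
      using G HZ GZX by (rule mult_add_distrib_mat)
    also have "G * (H * Z) = 0\<^sub>m k nn" using assoc_mult_mat[OF G H Z] GH left_mult_zero_mat[OF Z] by simp
    also have "G * (G * Z * X) = G * Z * X" using assoc_mult_mat[OF G Z X] assoc_mult_mat[OF G G ZX] GG by simp
    finally have "G * (H * Z + G * Z * X) = G * Z * X" using GZX by simp
    moreover have "G * Z \<in> carrier_mat k nn" using G Z by simp
    ultimately show ?thesis using assoc_mult_mat[OF _ X X, of "G * Z"] XX by simp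
  qed
  show ?thesis using 1 2 unfolding G_def by simp
qed

lemma outer_carrier[simp]: "outer u v \<in> carrier_mat (dim_vec u) (dim_vec v)"
  unfolding outer_def by simp

lemma dim_outer[simp]: "dim_row (outer u v) = dim_vec u" "dim_col (outer u v) = dim_vec v"
  unfolding outer_def by simp_all

lemma smult_one_mat'[simp]: "(1::complex) \<cdot>\<^sub>m A = A"
  by (intro eq_matI) auto

lemma dim_cvec[simp]: "dim_vec (cvec v) = dim_vec v"
  unfolding cvec_def by simp

lemma cvec_index[simp]: "i < dim_vec v \<Longrightarrow> cvec v $ i = complex_of_real (v $ i)"
  unfolding cvec_def by simp

lemma outer_index: "i < dim_vec u \<Longrightarrow> j < dim_vec v \<Longrightarrow> outer u v $$ (i,j) = u $ i * cnj (v $ j)"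
  unfolding outer_def by simp

lemma outer_mult:
  assumes "dim_vec v = dim_vec w"
  shows "outer u v * outer w z = (\<Sum>n<dim_vec v. cnj (v $ n) * w $ n) \<cdot>\<^sub>m outer u z"
  using assms
  by (intro eq_matI) (auto simp: outer_index scalar_prod_def sum_distrib_left sum_distrib_right
      atLeast0LessThan mult_ac intro!: sum.cong)

lemma unit_sum:
  assumes "rnorm h = 1"
  shows "(\<Sum>n<dim_vec h. cnj (cvec h $ n) * cvec h $ n) = 1"
proof -
  have s: "(\<Sum>n<dim_vec h. (h $ n)\<^sup>2) = 1"
    using assms unfolding rnorm_def by (metis real_sqrt_eq_1_iff)
  have "(\<Sum>n<dim_vec h. cnj (cvec h $ n) * cvec h $ n) = (\<Sum>n<dim_vec h. complex_of_real ((h $ n)\<^sup>2))"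
    by (intro sum.cong) (auto simp: power2_eq_square)
  also have "\<dots> = 1" using s by (metis of_real_1 of_real_sum)
  finally show ?thesis .
qed

lemma frob_outer_unit:
  assumes "rnorm h = 1" "rnorm x = 1"
  shows "frob (outer (cvec h) (cvec x)) = 1"
proof -
  have sh: "(\<Sum>n<dim_vec h. (h $ n)\<^sup>2) = 1"
    using assms unfolding rnorm_def by (metis real_sqrt_eq_1_iff)
  have sx: "(\<Sum>n<dim_vec x. (x $ n)\<^sup>2) = 1"
    using assms unfolding rnorm_def by (metis real_sqrt_eq_1_iff)
  have "(\<Sum>k<dim_vec h. \<Sum>n<dim_vec x. (cmod (outer (cvec h) (cvec x) $$ (k, n)))\<^sup>2)
      = (\<Sum>k<dim_vec h. \<Sum>n<dim_vec x. (h $ k)\<^sup>2 * (x $ n)\<^sup>2)"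
    by (intro sum.cong) (auto simp: outer_index norm_mult power_mult_distrib)
  also have "\<dots> = (\<Sum>k<dim_vec h. (h $ k)\<^sup>2 * (\<Sum>n<dim_vec x. (x $ n)\<^sup>2))"
    by (simp add: sum_distrib_left)
  also have "\<dots> = (\<Sum>k<dim_vec h. (h $ k)\<^sup>2) * (\<Sum>n<dim_vec x. (x $ n)\<^sup>2)"
    by (simp add: sum_distrib_right)
  also have "\<dots> = 1" using sh sx by simp
  finally show ?thesis unfolding frob_def by simp
qed

lemma PT_carrier:
  "Z \<in> carrier_mat (dim_vec h) (dim_vec x) \<Longrightarrow> PT h x Z \<in> carrier_mat (dim_vec h) (dim_vec x)"
  unfolding PT_def by (auto intro!: add_carrier_mat mult_carrier_mat minus_carrier_mat)

lemma PT_add: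
  "A \<in> carrier_mat (dim_vec h) (dim_vec x) \<Longrightarrow> B \<in> carrier_mat (dim_vec h) (dim_vec x)
   \<Longrightarrow> PT h x (A + B) = PT h x A + PT h x B"
  unfolding PT_def by (rule PT_gen_add) auto

lemma PT_smult:
  "A \<in> carrier_mat (dim_vec h) (dim_vec x) \<Longrightarrow> PT h x (c \<cdot>\<^sub>m A) = c \<cdot>\<^sub>m PT h x A"
  unfolding PT_def by (rule PT_gen_smult) auto

lemma PT_minus:
  assumes A: "A \<in> carrier_mat (dim_vec h) (dim_vec x)" and B: "B \<in> carrier_mat (dim_vec h) (dim_vec x)"
  shows "PT h x (A - B) = PT h x A - PT h x B"
proof -
  have "A - B = A + (-1) \<cdot>\<^sub>m B" using A B by (intro eq_matI) auto
  then have "PT h x (A - B) = PT h x A + (-1) \<cdot>\<^sub>m PT h x B"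
    using PT_add[OF A, of "(-1) \<cdot>\<^sub>m B"] PT_smult[OF B] B by simp
  also have "\<dots> = PT h x A - PT h x B"
    using PT_carrier[OF A] PT_carrier[OF B] by (intro eq_matI) auto
  finally show ?thesis .
qed

lemma PT_zero: "PT h x (0\<^sub>m (dim_vec h) (dim_vec x)) = 0\<^sub>m (dim_vec h) (dim_vec x)"
  unfolding PT_def by (auto intro!: eq_matI)

lemma PT_idem:
  assumes "rnorm h = 1" "rnorm x = 1" and Z: "Z \<in> carrier_mat (dim_vec h) (dim_vec x)"
  shows "PT h x (PT h x Z) = PT h x Z"
proof -
  have HH: "outer (cvec h) (cvec h) * outer (cvec h) (cvec h) = outer (cvec h) (cvec h)"
    using outer_mult[of "cvec h" "cvec h" "cvec h" "cvec h"] unit_sum[OF assms(1)] by simp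
  have XX: "outer (cvec x) (cvec x) * outer (cvec x) (cvec x) = outer (cvec x) (cvec x)"
    using outer_mult[of "cvec x" "cvec x" "cvec x" "cvec x"] unit_sum[OF assms(2)] by simp
  show ?thesis unfolding PT_def
    by (rule PT_gen_idem[OF _ _ HH XX]) (use Z in auto)
qed

lemma PT_M:
  assumes "rnorm h = 1" "rnorm x = 1"
  shows "PT h x (outer (cvec h) (cvec x)) = outer (cvec h) (cvec x)"
proof -
  define H where "H = outer (cvec h) (cvec h)"
  define M where "M = outer (cvec h) (cvec x)"
  define X where "X = outer (cvec x) (cvec x)"
  have Hc: "H \<in> carrier_mat (dim_vec h) (dim_vec h)" unfolding H_def using outer_carrier[of "cvec h" "cvec h"] by simp
  have Mc: "M \<in> carrier_mat (dim_vec h) (dim_vec x)" unfolding M_def using outer_carrier[of "cvec h" "cvec x"] by simp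
  have Xc: "X \<in> carrier_mat (dim_vec x) (dim_vec x)" unfolding X_def using outer_carrier[of "cvec x" "cvec x"] by simp
  have HM: "H * M = M" unfolding H_def M_def
    using outer_mult[of "cvec h" "cvec h" "cvec h" "cvec x"] unit_sum[OF assms(1)] by simp
  have MX: "M * X = M" unfolding X_def M_def
    using outer_mult[of "cvec x" "cvec x" "cvec h" "cvec x"] unit_sum[OF assms(2)] by simp
  have G: "1\<^sub>m (dim_vec h) - H \<in> carrier_mat (dim_vec h) (dim_vec h)" using Hc by (simp add: minus_carrier_mat)
  have "(1\<^sub>m (dim_vec h) - H) * M * X = (1\<^sub>m (dim_vec h) - H) * M"
    using assoc_mult_mat[OF G Mc Xc] MX by simp
  also have "\<dots> = 1\<^sub>m (dim_vec h) * M - H * M" by (rule minus_mult_distrib_mat[OF one_carrier_mat Hc Mc])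
  also have "\<dots> = 0\<^sub>m (dim_vec h) (dim_vec x)" using HM Mc by (intro eq_matI) auto
  finally have "PT h x M = M + 0\<^sub>m (dim_vec h) (dim_vec x)"
    unfolding PT_def H_def[symmetric] X_def[symmetric] HM by simp
  then show ?thesis using Mc unfolding M_def using outer_carrier[of "cvec h" "cvec x"] by simp
qed

lemma bform_expand:
  assumes "dim_col Z = dim_vec v"
  shows "bform b Z v = (\<Sum>k<dim_row Z. (conjugate b $ k) * (\<Sum>n<dim_vec v. Z $$ (k,n) * v $ n))"
  unfolding bform_def scalar_prod_def using assms
  by (auto simp: atLeast0LessThan scalar_prod_def intro!: sum.cong)

lemma bform_add:
  assumes "A \<in> carrier_mat nr nc" "B \<in> carrier_mat nr nc" "dim_vec v = nc"
  shows "bform b (A + B) v = bform b A v + bform b B v"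
  using assms by (simp add: bform_expand ring_distribs sum.distrib)

lemma bform_smult:
  assumes "A \<in> carrier_mat nr nc" "dim_vec v = nc"
  shows "bform b (c \<cdot>\<^sub>m A) v = c * bform b A v"
  using assms by (simp add: bform_expand sum_distrib_left mult_ac)

lemma Aop_add:
  assumes "\<forall>l\<in>G. dim_vec (a i l) = nc" "A \<in> carrier_mat nr nc" "B \<in> carrier_mat nr nc"
  shows "Aop b a G i (A + B) = (\<lambda>l. Aop b a G i A l + Aop b a G i B l)"
  using assms unfolding Aop_def by (auto simp: bform_add)

lemma Aop_smult:
  assumes "\<forall>l\<in>G. dim_vec (a i l) = nc" "A \<in> carrier_mat nr nc"
  shows "Aop b a G i (c \<cdot>\<^sub>m A) = (\<lambda>l. c * Aop b a G i A l)"
  using assms unfolding Aop_def by (auto simp: bform_smult)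

lemma Aadj_carrier[simp]: "Aadj K N b a G i z \<in> carrier_mat (K i) (N i)"
  unfolding Aadj_def by simp

lemma Aadj_add: "Aadj K N b a G i (\<lambda>l. z1 l + z2 l) = Aadj K N b a G i z1 + Aadj K N b a G i z2"
  unfolding Aadj_def by (intro eq_matI) (auto simp: ring_distribs sum.distrib)

lemma Aadj_smult: "Aadj K N b a G i (\<lambda>l. c * z l) = c \<cdot>\<^sub>m Aadj K N b a G i z"
  unfolding Aadj_def by (intro eq_matI) (auto simp: sum_distrib_left mult_ac)

lemma Aadj_zero: "Aadj K N b a G i (\<lambda>l. 0) = 0\<^sub>m (K i) (N i)"
  unfolding Aadj_def by (intro eq_matI) auto

lemma frob_diff: assumes "A \<in> carrier_mat m n" "B \<in> carrier_mat m n"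
  shows "frob (A - B) \<le> frob A + frob B"
proof -
  have "A - B = A + (-1) \<cdot>\<^sub>m B" using assms by (intro eq_matI) auto
  then show ?thesis using frob_add[OF assms(1), of "(-1) \<cdot>\<^sub>m B"] assms by (simp add: frob_smult)
qed

lemma F_lin:
  fixes hi xi hk xk :: "real vec" and Sk :: "complex mat" and b :: "nat \<Rightarrow> nat \<Rightarrow> complex vec"
  assumes hi: "dim_vec hi = K i" and xi: "dim_vec xi = N i"
    and hk: "dim_vec hk = m" and xk: "dim_vec xk = n"
    and Sk: "Sk \<in> carrier_mat m m" and ad: "\<forall>l\<in>G. dim_vec (a k l) = n"
  defines "F \<equiv> \<lambda>Z. PT hi xi (Aadj K N b a G i (Aop b a G k (Sk * PT hk xk Z)))"
  shows "\<And>A B. A \<in> carrier_mat m n \<Longrightarrow> B \<in> carrier_mat m n \<Longrightarrow> F (A + B) = F A + F B"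
    and "\<And>A c. A \<in> carrier_mat m n \<Longrightarrow> F (c \<cdot>\<^sub>m A) = c \<cdot>\<^sub>m F A"
    and "\<And>A. A \<in> carrier_mat m n \<Longrightarrow> F A \<in> carrier_mat (K i) (N i)"
proof -
  have Ac: "Aadj K N b a G i z \<in> carrier_mat (dim_vec hi) (dim_vec xi)" for z
    using hi xi by simp
  fix A B :: "complex mat" assume A: "A \<in> carrier_mat m n" and B: "B \<in> carrier_mat m n"
  have PA: "PT hk xk A \<in> carrier_mat m n" using PT_carrier[of A hk xk] A hk xk by simp
  have PB: "PT hk xk B \<in> carrier_mat m n" using PT_carrier[of B hk xk] B hk xk by simp
  have "PT hk xk (A + B) = PT hk xk A + PT hk xk B" using PT_add[of A hk xk B] A B hk xk by simp
  then have "Sk * PT hk xk (A + B) = Sk * PT hk xk A + Sk * PT hk xk B"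
    using mult_add_distrib_mat[OF Sk PA PB] by simp
  then have "Aop b a G k (Sk * PT hk xk (A + B)) = (\<lambda>l. Aop b a G k (Sk * PT hk xk A) l + Aop b a G k (Sk * PT hk xk B) l)"
    using Aop_add[where a=a and i=k, OF ad, of "Sk * PT hk xk A" m "Sk * PT hk xk B"] Sk PA PB by simp
  then show "F (A + B) = F A + F B" unfolding F_def using PT_add[OF Ac Ac] by (simp add: Aadj_add)
next
  have Ac: "Aadj K N b a G i z \<in> carrier_mat (dim_vec hi) (dim_vec xi)" for z
    using hi xi by simp
  fix A :: "complex mat" and c :: complex assume A: "A \<in> carrier_mat m n"
  have PA: "PT hk xk A \<in> carrier_mat m n" using PT_carrier[of A hk xk] A hk xk by simp
  have "PT hk xk (c \<cdot>\<^sub>m A) = c \<cdot>\<^sub>m PT hk xk A" using PT_smult[of A hk xk] A hk xk by simp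
  then have "Sk * PT hk xk (c \<cdot>\<^sub>m A) = c \<cdot>\<^sub>m (Sk * PT hk xk A)"
    using mult_smult_distrib[OF Sk PA] by simp
  then have "Aop b a G k (Sk * PT hk xk (c \<cdot>\<^sub>m A)) = (\<lambda>l. c * Aop b a G k (Sk * PT hk xk A) l)"
    using Aop_smult[where a=a and i=k, OF ad, of "Sk * PT hk xk A" m] Sk PA by simp
  then show "F (c \<cdot>\<^sub>m A) = c \<cdot>\<^sub>m F A" unfolding F_def using PT_smult[OF Ac] by (simp add: Aadj_smult)
next
  fix A :: "complex mat"
  show "F A \<in> carrier_mat (K i) (N i)" unfolding F_def
    using PT_carrier[of "Aadj K N b a G i _" hi xi] hi xi by simp
qed

lemma D_lin:
  fixes hk xk :: "real vec" and Sk :: "complex mat" and b :: "nat \<Rightarrow> nat \<Rightarrow> complex vec"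
  assumes hk: "dim_vec hk = K k" and xk: "dim_vec xk = N k"
    and Sk: "Sk \<in> carrier_mat (K k) (K k)" and ad: "\<forall>l\<in>G. dim_vec (a k l) = N k"
  defines "D \<equiv> \<lambda>Z. PT hk xk (Aadj K N b a G k (Aop b a G k (Sk * PT hk xk Z))) - PT hk xk Z"
  shows "\<And>A B. A \<in> carrier_mat (K k) (N k) \<Longrightarrow> B \<in> carrier_mat (K k) (N k) \<Longrightarrow> D (A + B) = D A + D B"
    and "\<And>A c. A \<in> carrier_mat (K k) (N k) \<Longrightarrow> D (c \<cdot>\<^sub>m A) = c \<cdot>\<^sub>m D A"
    and "\<And>A. A \<in> carrier_mat (K k) (N k) \<Longrightarrow> D A \<in> carrier_mat (K k) (N k)"
proof -
  note L = F_lin[where K=K and N=N and i=k and a=a and k=k and b=b, OF hk xk hk xk Sk ad]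
  have PC: "PT hk xk A \<in> carrier_mat (K k) (N k)" if "A \<in> carrier_mat (K k) (N k)" for A
    using PT_carrier[of A hk xk] that hk xk by simp
  have PA: "PT hk xk (A + B) = PT hk xk A + PT hk xk B" if "A \<in> carrier_mat (K k) (N k)" "B \<in> carrier_mat (K k) (N k)" for A B
    using PT_add[of A hk xk B] that hk xk by simp
  have PS: "PT hk xk (c \<cdot>\<^sub>m A) = c \<cdot>\<^sub>m PT hk xk A" if "A \<in> carrier_mat (K k) (N k)" for A c
    using PT_smult[of A hk xk] that hk xk by simp
  fix A B :: "complex mat" assume A: "A \<in> carrier_mat (K k) (N k)" and B: "B \<in> carrier_mat (K k) (N k)"
  show "D (A + B) = D A + D B" unfolding D_def
    apply (subst L(1)[OF A B], subst PA[OF A B])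
    using L(3)[OF A] L(3)[OF B] PC[OF A] PC[OF B] by (intro eq_matI) auto
next
  note L = F_lin[where K=K and N=N and i=k and a=a and k=k and b=b, OF hk xk hk xk Sk ad]
  have PC: "PT hk xk A \<in> carrier_mat (K k) (N k)" if "A \<in> carrier_mat (K k) (N k)" for A
    using PT_carrier[of A hk xk] that hk xk by simp
  have PS: "PT hk xk (c \<cdot>\<^sub>m A) = c \<cdot>\<^sub>m PT hk xk A" if "A \<in> carrier_mat (K k) (N k)" for A c
    using PT_smult[of A hk xk] that hk xk by simp
  fix A :: "complex mat" and c :: complex assume A: "A \<in> carrier_mat (K k) (N k)"
  show "D (c \<cdot>\<^sub>m A) = c \<cdot>\<^sub>m D A" unfolding D_def
    apply (subst L(2)[OF A], subst PS[OF A])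
    using L(3)[OF A] PC[OF A] by (intro eq_matI) (auto simp: ring_distribs)
next
  note L = F_lin[where K=K and N=N and i=k and a=a and k=k and b=b, OF hk xk hk xk Sk ad]
  fix A :: "complex mat" assume A: "A \<in> carrier_mat (K k) (N k)"
  show "D A \<in> carrier_mat (K k) (N k)" unfolding D_def using PT_carrier[of A hk xk] A hk xk by (simp add: minus_carrier_mat)
qed

lemma PT_Aadj_sum:
  fixes hi xi :: "real vec" and b :: "nat \<Rightarrow> nat \<Rightarrow> complex vec"
  assumes hi: "dim_vec hi = K i" and xi: "dim_vec xi = N i" and J: "finite J"
  shows "frob (PT hi xi (Aadj K N b a G i (\<lambda>l. \<Sum>j\<in>J. f j l)))
           \<le> (\<Sum>j\<in>J. frob (PT hi xi (Aadj K N b a G i (f j))))"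
  using J
proof (induction J rule: finite_induct)
  case empty
  have "PT hi xi (Aadj K N b a G i (\<lambda>l. 0)) = 0\<^sub>m (K i) (N i)"
    unfolding Aadj_zero using PT_zero[of hi xi] hi xi by simp
  then show ?case by (simp add: frob_zero)
next
  case (insert j J)
  have Ac: "Aadj K N b a G i z \<in> carrier_mat (dim_vec hi) (dim_vec xi)" for z
    using hi xi by simp
  have "(\<lambda>l. \<Sum>j\<in>insert j J. f j l) = (\<lambda>l. f j l + (\<Sum>j\<in>J. f j l))"
    using insert by simp
  then have "PT hi xi (Aadj K N b a G i (\<lambda>l. \<Sum>j\<in>insert j J. f j l))
     = PT hi xi (Aadj K N b a G i (f j)) + PT hi xi (Aadj K N b a G i (\<lambda>l. \<Sum>j\<in>J. f j l))"
    using PT_add[OF Ac Ac] by (simp add: Aadj_add)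
  moreover have "frob (PT hi xi (Aadj K N b a G i (f j)) + PT hi xi (Aadj K N b a G i (\<lambda>l. \<Sum>j\<in>J. f j l)))
     \<le> frob (PT hi xi (Aadj K N b a G i (f j))) + frob (PT hi xi (Aadj K N b a G i (\<lambda>l. \<Sum>j\<in>J. f j l)))"
    by (rule frob_add[OF PT_carrier[OF Ac] PT_carrier[OF Ac]])
  ultimately show ?case using insert by simp
qed

lemma golf_carrier: "golf r K N h x b a \<Gamma> S p i \<in> carrier_mat (K i) (N i)"
  by (induction p arbitrary: i) (auto simp: Let_def)

lemma golf_Suc: "golf r K N h x b a \<Gamma> S (Suc p) i = golf r K N h x b a \<Gamma> S p i +
   Aadj K N b a (\<Gamma> (Suc p)) i (\<lambda>l. \<Sum>j\<in>{1..r}. Aop b a (\<Gamma> (Suc p)) j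
                  (S j (Suc p) * (outer (cvec (h j)) (cvec (x j)) - PT (h j) (x j) (golf r K N h x b a \<Gamma> S p j))) l)"
  by (simp add: Let_def)

theorem lemma5:
  fixes r L P Q :: nat
    and K N :: "nat \<Rightarrow> nat"
    and h x :: "nat \<Rightarrow> real vec"
    and b :: "nat \<Rightarrow> nat \<Rightarrow> complex vec"
    and a :: "nat \<Rightarrow> nat \<Rightarrow> real vec"
    and \<Gamma> :: "nat \<Rightarrow> nat set"
    and S :: "nat \<Rightarrow> nat \<Rightarrow> complex mat"
    and \<gamma> :: real
  assumes h_dim: "\<forall>i\<in>{1..r}. dim_vec (h i) = K i"
    and x_dim: "\<forall>i\<in>{1..r}. dim_vec (x i) = N i"
    and h_unit: "\<forall>i\<in>{1..r}. rnorm (h i) = 1"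
    and x_unit: "\<forall>i\<in>{1..r}. rnorm (x i) = 1"
    and b_dim: "\<forall>i\<in>{1..r}. \<forall>l\<in>{1..L}. dim_vec (b i l) = K i"
    and a_dim: "\<forall>i\<in>{1..r}. \<forall>l\<in>{1..L}. dim_vec (a i l) = N i"
    and part_sub: "\<forall>p\<in>{1..P}. \<Gamma> p \<subseteq> {1..L}"
    and part_cover: "(\<Union>p\<in>{1..P}. \<Gamma> p) = {1..L}"
    and part_disj: "\<forall>p\<in>{1..P}. \<forall>q\<in>{1..P}. p \<noteq> q \<longrightarrow> \<Gamma> p \<inter> \<Gamma> q = {}"
    and part_card: "\<forall>p\<in>{1..P}. card (\<Gamma> p) = Q"
    and T_inv: "\<forall>i\<in>{1..r}. \<forall>p\<in>{1..P}. invertible_mat (Tmat K b (\<Gamma> p) i)"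
    and S_carrier: "\<forall>i\<in>{1..r}. \<forall>p\<in>{1..P}. S i p \<in> carrier_mat (K i) (K i)"
    and S_inv: "\<forall>i\<in>{1..r}. \<forall>p\<in>{1..P}.
                  S i p * Tmat K b (\<Gamma> p) i = 1\<^sub>m (K i) \<and> Tmat K b (\<Gamma> p) i * S i p = 1\<^sub>m (K i)"
    and \<gamma>_pos: "\<gamma> > 0"
    and \<gamma>_bound: "\<forall>i\<in>{1..r}. op_norm (K i) (N i) (cnorm_on {1..L}) (Aop b a {1..L} i) \<le> \<gamma>"
    and diag: "\<forall>i\<in>{1..r}. \<forall>p\<in>{1..P}.
       op_norm (K i) (N i) frob
         (\<lambda>Z. PT (h i) (x i) (Aadj K N b a (\<Gamma> p) i (Aop b a (\<Gamma> p) i (S i p * PT (h i) (x i) Z)))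
              - PT (h i) (x i) Z) \<le> 1 / 4"
    and offdiag: "\<forall>j\<in>{1..r}. \<forall>k\<in>{1..r}. \<forall>p\<in>{1..P}. j \<noteq> k \<longrightarrow>
       op_norm (K k) (N k) frob
         (\<lambda>Z. PT (h j) (x j) (Aadj K N b a (\<Gamma> p) j (Aop b a (\<Gamma> p) k (S k p * PT (h k) (x k) Z))))
         \<le> 1 / (4 * real r)"
  shows "(\<forall>i\<in>{1..r}. \<forall>p\<in>{1..P}.
            frob (outer (cvec (h i)) (cvec (x i)) - PT (h i) (x i) (golf r K N h x b a \<Gamma> S p i))
              = frob (PT (h i) (x i) (golf r K N h x b a \<Gamma> S p i) - outer (cvec (h i)) (cvec (x i)))
          \<and> frob (outer (cvec (h i)) (cvec (x i)) - PT (h i) (x i) (golf r K N h x b a \<Gamma> S p i))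
              \<le> 1 / 2 ^ p)
       \<and> (real P \<ge> log 2 (5 * real r * \<gamma>) \<longrightarrow>
           (\<forall>i\<in>{1..r}.
              frob (PT (h i) (x i) (golf r K N h x b a \<Gamma> S P i) - outer (cvec (h i)) (cvec (x i)))
                \<le> 1 / (5 * real r * \<gamma>)))"
proof -
  define Y where "Y p = golf r K N h x b a \<Gamma> S p" for p
  define M where "M i = outer (cvec (h i)) (cvec (x i))" for i
  define W where "W p i = M i - PT (h i) (x i) (Y p i)" for p i
  have Yc: "Y p i \<in> carrier_mat (K i) (N i)" for p i unfolding Y_def by (rule golf_carrier)
  have hd: "dim_vec (h i) = K i" and xd: "dim_vec (x i) = N i" if "i \<in> {1..r}" for i
    using h_dim x_dim that by auto
  have Mc: "M i \<in> carrier_mat (K i) (N i)" if "i \<in> {1..r}" for i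
    unfolding M_def using outer_carrier[of "cvec (h i)" "cvec (x i)"] hd[OF that] xd[OF that] by simp
  have Yc': "Y p i \<in> carrier_mat (dim_vec (h i)) (dim_vec (x i))" if "i \<in> {1..r}" for p i
    using Yc hd[OF that] xd[OF that] by simp
  have Mc': "M i \<in> carrier_mat (dim_vec (h i)) (dim_vec (x i))" if "i \<in> {1..r}" for i
    using Mc[OF that] hd[OF that] xd[OF that] by simp
  have PYc: "PT (h i) (x i) (Y p i) \<in> carrier_mat (K i) (N i)" if "i \<in> {1..r}" for p i
    using PT_carrier[OF Yc'[OF that]] hd[OF that] xd[OF that] by simp
  have Wc: "W p i \<in> carrier_mat (K i) (N i)" if "i \<in> {1..r}" for p i
    unfolding W_def using PYc[OF that] by (simp add: minus_carrier_mat)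
  have PW: "PT (h i) (x i) (W p i) = W p i" if i: "i \<in> {1..r}" for p i
  proof -
    have hu: "rnorm (h i) = 1" and xu: "rnorm (x i) = 1" using h_unit x_unit i by auto
    have "PT (h i) (x i) (W p i) = PT (h i) (x i) (M i) - PT (h i) (x i) (PT (h i) (x i) (Y p i))"
      unfolding W_def by (rule PT_minus[OF Mc'[OF i] PT_carrier[OF Yc'[OF i]]])
    also have "\<dots> = W p i" unfolding W_def M_def PT_M[OF hu xu] PT_idem[OF hu xu Yc'[OF i]] ..
    finally show ?thesis .
  qed
  have main: "\<forall>i\<in>{1..r}. frob (W p i) \<le> 1 / 2 ^ p" if "p \<le> P" for p
    using that
  proof (induction p)
    case 0
    show ?case
    proof
      fix i assume i: "i \<in> {1..r}"
      have hu: "rnorm (h i) = 1" and xu: "rnorm (x i) = 1" using h_unit x_unit i by auto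
      have "Y 0 i = 0\<^sub>m (dim_vec (h i)) (dim_vec (x i))" unfolding Y_def using hd[OF i] xd[OF i] by simp
      then have "W 0 i = M i - 0\<^sub>m (dim_vec (h i)) (dim_vec (x i))" unfolding W_def using PT_zero[of "h i" "x i"] by simp
      then have "W 0 i = M i" using Mc'[OF i] by (intro eq_matI) auto
      then show "frob (W 0 i) \<le> 1 / 2 ^ 0" unfolding M_def using frob_outer_unit[OF hu xu] by simp
    qed
  next
    case (Suc p)
    define q where "q = Suc p"
    have q: "q \<in> {1..P}" using Suc.prems unfolding q_def by auto
    have IH: "\<forall>i\<in>{1..r}. frob (W p i) \<le> 1 / 2 ^ p" using Suc by simp
    have ad: "\<forall>l\<in>\<Gamma> q. dim_vec (a j l) = N j" if "j \<in> {1..r}" for j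
      using a_dim part_sub q that by blast
    have Sc: "S j q \<in> carrier_mat (K j) (K j)" if "j \<in> {1..r}" for j
      using S_carrier q that by blast
    show ?case
    proof
      fix i assume i: "i \<in> {1..r}"
      define f where "f j = Aop b a (\<Gamma> q) j (S j q * W p j)" for j
      define A1 where "A1 = Aadj K N b a (\<Gamma> q) i (f i)"
      define A2 where "A2 = Aadj K N b a (\<Gamma> q) i (\<lambda>l. \<Sum>j\<in>{1..r}-{i}. f j l)"
      have A1c: "A1 \<in> carrier_mat (dim_vec (h i)) (dim_vec (x i))" unfolding A1_def using hd[OF i] xd[OF i] by simp
      have A2c: "A2 \<in> carrier_mat (dim_vec (h i)) (dim_vec (x i))" unfolding A2_def using hd[OF i] xd[OF i] by simp
      have Ysuc: "Y q i = Y p i + Aadj K N b a (\<Gamma> q) i (\<lambda>l. \<Sum>j\<in>{1..r}. f j l)"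
        unfolding Y_def f_def W_def M_def q_def by (rule golf_Suc)
      have "(\<lambda>l. \<Sum>j\<in>{1..r}. f j l) = (\<lambda>l. f i l + (\<Sum>j\<in>{1..r}-{i}. f j l))"
        using i by (simp add: sum.remove)
      then have Ysuc2: "Y q i = Y p i + (A1 + A2)" unfolding Ysuc A1_def A2_def by (simp add: Aadj_add)
      have "PT (h i) (x i) (Y q i) = PT (h i) (x i) (Y p i) + (PT (h i) (x i) A1 + PT (h i) (x i) A2)"
        unfolding Ysuc2 using PT_add[OF Yc'[OF i], of "A1 + A2"] PT_add[OF A1c A2c] A1c A2c by simp
      then have Wq: "W q i = (W p i - PT (h i) (x i) A1) - PT (h i) (x i) A2"
        unfolding W_def using Mc'[OF i] PT_carrier[OF Yc'[OF i, where p=p]] PT_carrier[OF Yc'[OF i, where p=q]] PT_carrier[OF A1c] PT_carrier[OF A2c]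
        by (intro eq_matI) auto
      have Wc': "W p i \<in> carrier_mat (dim_vec (h i)) (dim_vec (x i))" using Wc[OF i] hd[OF i] xd[OF i] by simp
      have "frob (W q i) \<le> frob (W p i - PT (h i) (x i) A1) + frob (PT (h i) (x i) A2)"
        unfolding Wq by (rule frob_diff) (use Wc' PT_carrier[OF A1c] PT_carrier[OF A2c] in \<open>auto simp: minus_carrier_mat\<close>)
      moreover have "frob (W p i - PT (h i) (x i) A1) \<le> 1 / 4 * (1 / 2 ^ p)"
      proof -
        define D where "D Z = PT (h i) (x i) (Aadj K N b a (\<Gamma> q) i (Aop b a (\<Gamma> q) i (S i q * PT (h i) (x i) Z)))
              - PT (h i) (x i) Z" for Z
        note DL = D_lin[where K=K and N=N and k=i and a=a and b=b and G="\<Gamma> q", OF hd[OF i] xd[OF i] Sc[OF i] ad[OF i]]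
        have "D (W p i) = PT (h i) (x i) A1 - W p i"
          unfolding D_def A1_def f_def PW[OF i] ..
        then have "frob (W p i - PT (h i) (x i) A1) = frob (D (W p i))"
          using frob_minus_commute[OF Wc' PT_carrier[OF A1c]] by simp
        also have "\<dots> \<le> op_norm (K i) (N i) frob D * frob (W p i)"
          unfolding D_def by (rule op_norm_le[OF DL(1) DL(2) DL(3) Wc[OF i]])
        also have "\<dots> \<le> 1 / 4 * (1 / 2 ^ p)"
        proof (rule mult_mono)
          show "op_norm (K i) (N i) frob D \<le> 1 / 4" using diag i q unfolding D_def by blast
          show "frob (W p i) \<le> 1 / 2 ^ p" using IH i by blast
        qed (auto simp: frob_nonneg)
        finally show ?thesis .
      qed
      moreover have "frob (PT (h i) (x i) A2) \<le> (\<Sum>j\<in>{1..r}-{i}. 1 / (4 * real r) * (1 / 2 ^ p))"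
      proof -
        have "frob (PT (h i) (x i) A2) \<le> (\<Sum>j\<in>{1..r}-{i}. frob (PT (h i) (x i) (Aadj K N b a (\<Gamma> q) i (f j))))"
          unfolding A2_def by (rule PT_Aadj_sum[where K=K and N=N and i=i, OF hd[OF i] xd[OF i]]) simp
        also have "\<dots> \<le> (\<Sum>j\<in>{1..r}-{i}. 1 / (4 * real r) * (1 / 2 ^ p))"
        proof (rule sum_mono)
          fix j assume j: "j \<in> {1..r}-{i}"
          then have j1: "j \<in> {1..r}" and ji: "i \<noteq> j" by auto
          define F where "F Z = PT (h i) (x i) (Aadj K N b a (\<Gamma> q) i (Aop b a (\<Gamma> q) j (S j q * PT (h j) (x j) Z)))" for Z
          note FL = F_lin[where K=K and N=N and i=i and k=j and a=a and b=b and G="\<Gamma> q",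
               OF hd[OF i] xd[OF i] hd[OF j1] xd[OF j1] Sc[OF j1] ad[OF j1]]
          have "PT (h i) (x i) (Aadj K N b a (\<Gamma> q) i (f j)) = F (W p j)"
            unfolding F_def f_def PW[OF j1] ..
          also have "frob \<dots> \<le> op_norm (K j) (N j) frob F * frob (W p j)"
            unfolding F_def by (rule op_norm_le[OF FL(1) FL(2) FL(3) Wc[OF j1]])
          also have "\<dots> \<le> 1 / (4 * real r) * (1 / 2 ^ p)"
          proof (rule mult_mono)
            show "op_norm (K j) (N j) frob F \<le> 1 / (4 * real r)" using offdiag i j1 q ji unfolding F_def by blast
            show "frob (W p j) \<le> 1 / 2 ^ p" using IH j1 by blast
          qed (auto simp: frob_nonneg)
          finally show "frob (PT (h i) (x i) (Aadj K N b a (\<Gamma> q) i (f j))) \<le> 1 / (4 * real r) * (1 / 2 ^ p)" .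
        qed
        finally show ?thesis .
      qed
      moreover have "(\<Sum>j\<in>{1..r}-{i}. 1 / (4 * real r) * (1 / (2::real) ^ p)) \<le> 1 / 4 * (1 / 2 ^ p)"
      proof -
        have c: "card ({1..r}-{i}) = r - 1" using i by simp
        have r1: "r \<ge> 1" using i by simp
        have "(\<Sum>j\<in>{1..r}-{i}. 1 / (4 * real r) * (1 / (2::real) ^ p)) = real (r - 1) / (4 * real r) * (1 / 2 ^ p)"
          using c by simp
        also have "\<dots> \<le> 1 / 4 * (1 / 2 ^ p)"
          using r1 by (intro mult_right_mono) (auto simp: field_simps of_nat_diff)
        finally show ?thesis .
      qed
      ultimately have "frob (W q i) \<le> 1 / 2 * (1 / 2 ^ p)" by linarith
      then show "frob (W (Suc p) i) \<le> 1 / 2 ^ Suc p" unfolding q_def by simp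
    qed
  qed
  show ?thesis
  proof (intro conjI ballI impI)
    fix i p assume i: "i \<in> {1..r}" and p: "p \<in> {1..P}"
    show "frob (outer (cvec (h i)) (cvec (x i)) - PT (h i) (x i) (golf r K N h x b a \<Gamma> S p i))
              = frob (PT (h i) (x i) (golf r K N h x b a \<Gamma> S p i) - outer (cvec (h i)) (cvec (x i)))"
      using frob_minus_commute[OF Mc[OF i] PYc[OF i]] unfolding M_def Y_def .
    show "frob (outer (cvec (h i)) (cvec (x i)) - PT (h i) (x i) (golf r K N h x b a \<Gamma> S p i)) \<le> 1 / 2 ^ p"
      using main[of p] p i unfolding W_def M_def Y_def by auto
  next
    fix i assume P: "log 2 (5 * real r * \<gamma>) \<le> real P" and i: "i \<in> {1..r}"
    have pos: "5 * real r * \<gamma> > 0" using i \<gamma>_pos by simp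
    have "5 * real r * \<gamma> \<le> 2 powr real P" using P pos by (simp add: log_le_iff)
    then have le: "5 * real r * \<gamma> \<le> 2 ^ P" by (simp add: powr_realpow)
    have "frob (W P i) \<le> 1 / 2 ^ P" using main[of P] i by auto
    also have "\<dots> \<le> 1 / (5 * real r * \<gamma>)" using le pos by (intro divide_left_mono) auto
    finally show "frob (PT (h i) (x i) (golf r K N h x b a \<Gamma> S P i) - outer (cvec (h i)) (cvec (x i)))
                \<le> 1 / (5 * real r * \<gamma>)"
      using frob_minus_commute[OF Mc[OF i] PYc[OF i]] unfolding W_def M_def Y_def by simp
  qed
qed

end
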